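(* Consider the static single-object erasure-coded Byzantine read/write protocol described in the context over a set $C$ of flexnodes, at most $b<\frac{|C|-k}{3}$ of which are Byzantine. In any execution, let $\pi$ and $\omega$ be complete operations, where $\pi$ is a read or a write and $\omega$ is a write, such that $\pi$ completes before $\omega$ is invoked. If $\pi$ executes put-data$(\langle t_\pi,v_\pi\rangle)$ on $C$ and $\omega$ executes put-data$(\langle t_\omega,v_\omega\rangle)$ on $C$, then $t_\omega>t_\pi$.
   Context: Model. $C$ is a fixed finite set of processes ("flexnodes") over asynchronous reliable channels (messages between nonfaulty processes eventually delivered unaltered). Up to $b$ flexnodes may be Byzantine. Processes invoking reads/writes follow the protocol but may crash. Signatures are unforgeable. An $[n,k]$ RLNC code with $n=|C|$: $\mathrm{Encode}(v)$ produces $|C|$ coded elements, any $k$ of which (from the same encoding) recover $v$. Tags are pairs $(z,w)$, $z\in\mathbb{N}$, $w$ a writer identifier from a totally ordered set, with $(z_1,w_1)<(z_2,w_2)$ iff $z_1<z_2$, or $z_1=z_2$ and $w_1<w_2$. A parameter $\delta\ge1$ is fixed. A quorum is any subset of $C$ of size $\lceil (2|C|+k)/3\rceil$. State. Each flexnode keeps a set $List$ of signed triples $(\langle t,e\rangle,\sigma)$, initially holding the initial pair with tag $t_0$. Primitives (by flexnode $p$): get-tag: query all, each replies with its signed max-tag entry, wait for replies from a quorum, return the maximum tag among replies with valid signatures. put-data$(\langle t,v\rangle)$: encode $v$ into $e_1,\dots,e_{|C|}$, send $\langle t,e_j\rangle$ signed by $p$ to the $j$-th flexnode; a receiver adds it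 to $List$ if the signature verifies and no entry with tag $t$ exists, then if $|List|>\delta+1$ removes the entries with minimum tag, and acknowledges; $p$ waits for a quorum of acknowledgements. get-data: query all, each replies with its $List$, wait for a quorum, keep verified pairs, take the maximum tag appearing in at least $k$ received lists, decode and return it; if none exists the primitive does not complete. Operations: read = get-data then put-data of the obtained pair, returning it; write$(v)$ by writer $w$ = get-tag returning $t$, then put-data$(\langle (t.z+1,w),v\rangle)$. *)

theory Defs
  imports Complex_Main "HOL-Library.Product_Lexorder"
begin

text \<open>Flexnodes have type 'n, client processes (readers/writers) have type 'c
  (totally ordered: client identifiers are the writer identifiers), values 'v,
  coded elements 'e.  Tags are pairs (z,w) ordered lexicographically
  (Product_Lexorder).\<close>

type_synonym 'c tag = "nat \<times> 'c"

text \<open>Signatures: the signer of a signed triple.  SigInit is the signature on the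
  initial pairs.  Unforgeability is modelled by a global set of signed triples
  (field sigs of the state); a signature verifies iff the triple is in that set.
  Only clients (and the initialisation) sign.\<close>
datatype 'c signer = SigInit | SigBy 'c

type_synonym ('c,'e) entry = "(('c tag \<times> 'e) \<times> 'c signer)"

definition tag_of :: "('c,'e) entry \<Rightarrow> 'c tag" where
  "tag_of x = fst (fst x)"

datatype ('n,'c) proc = Node 'n | Client 'c

text \<open>Messages carry the operation number of the client operation they belong to.\<close>
datatype ('c,'e) payload =
    QTag nat
  | RTag nat "('c,'e) entry"
  | PutReq nat "('c,'e) entry"
  | Ack nat
  | QData nat
  | RData nat "('c,'e) entry set"

type_synonym ('n,'c,'e) msg = "('n,'c) proc \<times> ('n,'c) proc \<times> ('c,'e) payload"

fun entries_of :: "('c,'e) payload \<Rightarrow> ('c,'e) entry set" where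
  "entries_of (RTag m x) = {x}"
| "entries_of (PutReq m x) = {x}"
| "entries_of (RData m S) = S"
| "entries_of _ = {}"

datatype ('n,'c,'v,'e) phase =
    Idle
  | Crashed
  | WGetTag 'v "'n \<Rightarrow> ('c,'e) entry option"   \<comment> \<open>write: get-tag, replies so far\<close>
  | WPut "'c tag" "'n set"                     \<comment> \<open>write: put-data, acks so far\<close>
  | RGetData "'n \<Rightarrow> ('c,'e) entry set option" \<comment> \<open>read: get-data, replies so far\<close>
  | RPut "'c tag" 'v "'n set"                  \<comment> \<open>read: put-data, acks so far\<close>

record ('n,'c,'v,'e) gstate =
  nodeList :: "'n \<Rightarrow> ('c,'e) entry set"
  cl       :: "'c \<Rightarrow> nat \<times> ('n,'c,'v,'e) phase" \<comment> \<open>op counter and phase of each client\<close>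
  net      :: "('n,'c,'e) msg set"
  sigs     :: "('c,'e) entry set"                 \<comment> \<open>all validly signed triples\<close>

datatype ('c,'v) label =
    InvokeW 'c nat 'v
  | InvokeR 'c nat
  | PutData 'c nat "'c tag" 'v
  | Respond 'c nat
  | Tau

definition quorum_size :: "nat \<Rightarrow> nat \<Rightarrow> nat" where
  "quorum_size n k = nat \<lceil>(2 * real n + real k) / 3\<rceil>"

text \<open>Update of a List on receipt of a put-data message.\<close>
definition prune :: "nat \<Rightarrow> ('c::linorder,'e) entry set \<Rightarrow> ('c,'e) entry set" where
  "prune \<delta> L = (if card L > \<delta> + 1 then {y \<in> L. tag_of y \<noteq> Min (tag_of ` L)} else L)"

definition node_put :: "nat \<Rightarrow> ('c::linorder,'e) entry set \<Rightarrow> ('c,'e) entry \<Rightarrow> ('c,'e) entry set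
    \<Rightarrow> ('c,'e) entry set" where
  "node_put \<delta> S x L =
     prune \<delta> (if x \<in> S \<and> (\<forall>y\<in>L. tag_of y \<noteq> tag_of x) then insert x L else L)"

definition put_msgs :: "'n set \<Rightarrow> ('v \<Rightarrow> 'n \<Rightarrow> 'e) \<Rightarrow> 'c \<Rightarrow> nat \<Rightarrow> 'c tag \<Rightarrow> 'v
    \<Rightarrow> ('n,'c,'e) msg set" where
  "put_msgs C enc c m t v = {(Client c, Node j, PutReq m ((t, enc v j), SigBy c)) | j. j \<in> C}"

definition put_sigs :: "'n set \<Rightarrow> ('v \<Rightarrow> 'n \<Rightarrow> 'e) \<Rightarrow> 'c \<Rightarrow> 'c tag \<Rightarrow> 'v \<Rightarrow> ('c,'e) entry set" where
  "put_sigs C enc c t v = {((t, enc v j), SigBy c) | j. j \<in> C}"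

text \<open>Transition relation.  Parameters: set of flexnodes C, set of Byzantine flexnodes
  B, code dimension k, parameter delta, encoder and decoder.\<close>
inductive step :: "'n set \<Rightarrow> 'n set \<Rightarrow> nat \<Rightarrow> nat \<Rightarrow> ('v \<Rightarrow> 'n \<Rightarrow> 'e)
    \<Rightarrow> ('e set \<Rightarrow> 'v) \<Rightarrow> ('n,'c::linorder,'v,'e) gstate \<Rightarrow> ('c,'v) label
    \<Rightarrow> ('n,'c,'v,'e) gstate \<Rightarrow> bool"
  for C B k \<delta> enc dec where
  invoke_write:
  "cl s c = (m, Idle) \<Longrightarrow>
   step C B k \<delta> enc dec s (InvokeW c (Suc m) v)
     (s\<lparr>cl := (cl s)(c := (Suc m, WGetTag v Map.empty)),
        net := net s \<union> {(Client c, Node j, QTag (Suc m)) | j. j \<in> C}\<rparr>)"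
| invoke_read:
  "cl s c = (m, Idle) \<Longrightarrow>
   step C B k \<delta> enc dec s (InvokeR c (Suc m))
     (s\<lparr>cl := (cl s)(c := (Suc m, RGetData Map.empty)),
        net := net s \<union> {(Client c, Node j, QData (Suc m)) | j. j \<in> C}\<rparr>)"
| crash:
  "cl s c = (m, ph) \<Longrightarrow> ph \<noteq> Crashed \<Longrightarrow>
   step C B k \<delta> enc dec s Tau (s\<lparr>cl := (cl s)(c := (m, Crashed))\<rparr>)"
| node_qtag:
  "(Client c, Node j, QTag m) \<in> net s \<Longrightarrow> j \<in> C - B \<Longrightarrow>
   x \<in> nodeList s j \<Longrightarrow> (\<forall>y\<in>nodeList s j. tag_of y \<le> tag_of x) \<Longrightarrow>
   step C B k \<delta> enc dec s Tau
     (s\<lparr>net := insert (Node j, Client c, RTag m x) (net s - {(Client c, Node j, QTag m)})\<rparr>)"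
| node_qdata:
  "(Client c, Node j, QData m) \<in> net s \<Longrightarrow> j \<in> C - B \<Longrightarrow>
   step C B k \<delta> enc dec s Tau
     (s\<lparr>net := insert (Node j, Client c, RData m (nodeList s j))
                  (net s - {(Client c, Node j, QData m)})\<rparr>)"
| node_put:
  "(Client c, Node j, PutReq m x) \<in> net s \<Longrightarrow> j \<in> C - B \<Longrightarrow>
   step C B k \<delta> enc dec s Tau
     (s\<lparr>nodeList := (nodeList s)(j := node_put \<delta> (sigs s) x (nodeList s j)),
        net := insert (Node j, Client c, Ack m) (net s - {(Client c, Node j, PutReq m x)})\<rparr>)"
  \<comment> \<open>a Byzantine flexnode sends an arbitrary message from itself (authenticated
      channels), containing only validly signed triples (unforgeability)\<close>
| byz_send:
  "j \<in> B \<Longrightarrow> entries_of p \<subseteq> sigs s \<Longrightarrow>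
   step C B k \<delta> enc dec s Tau (s\<lparr>net := insert (Node j, dst, p) (net s)\<rparr>)"
| byz_recv:
  "(src, Node j, p) \<in> net s \<Longrightarrow> j \<in> B \<Longrightarrow>
   step C B k \<delta> enc dec s Tau (s\<lparr>net := net s - {(src, Node j, p)}\<rparr>)"
| client_rtag:
  "(Node j, Client c, RTag m x) \<in> net s \<Longrightarrow> cl s c = (m, WGetTag v R) \<Longrightarrow>
   j \<in> C \<Longrightarrow> R j = None \<Longrightarrow>
   step C B k \<delta> enc dec s Tau
     (s\<lparr>cl := (cl s)(c := (m, WGetTag v (R(j \<mapsto> x)))),
        net := net s - {(Node j, Client c, RTag m x)}\<rparr>)"
| client_tag_done:
  "cl s c = (m, WGetTag v R) \<Longrightarrow> card (dom R) \<ge> quorum_size (card C) k \<Longrightarrow>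
   t \<in> {tag_of x | x. x \<in> ran R \<and> x \<in> sigs s} \<Longrightarrow>
   (\<forall>x \<in> ran R. x \<in> sigs s \<longrightarrow> tag_of x \<le> t) \<Longrightarrow>
   t' = (Suc (fst t), c) \<Longrightarrow>
   step C B k \<delta> enc dec s (PutData c m t' v)
     (s\<lparr>cl := (cl s)(c := (m, WPut t' {})),
        net := net s \<union> put_msgs C enc c m t' v,
        sigs := sigs s \<union> put_sigs C enc c t' v\<rparr>)"
| client_ack_w:
  "(Node j, Client c, Ack m) \<in> net s \<Longrightarrow> cl s c = (m, WPut t A) \<Longrightarrow> j \<in> C \<Longrightarrow>
   step C B k \<delta> enc dec s Tau
     (s\<lparr>cl := (cl s)(c := (m, WPut t (insert j A))),
        net := net s - {(Node j, Client c, Ack m)}\<rparr>)"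
| client_write_done:
  "cl s c = (m, WPut t A) \<Longrightarrow> card A \<ge> quorum_size (card C) k \<Longrightarrow>
   step C B k \<delta> enc dec s (Respond c m) (s\<lparr>cl := (cl s)(c := (m, Idle))\<rparr>)"
| client_rdata:
  "(Node j, Client c, RData m L) \<in> net s \<Longrightarrow> cl s c = (m, RGetData R) \<Longrightarrow>
   j \<in> C \<Longrightarrow> R j = None \<Longrightarrow>
   step C B k \<delta> enc dec s Tau
     (s\<lparr>cl := (cl s)(c := (m, RGetData (R(j \<mapsto> L)))),
        net := net s - {(Node j, Client c, RData m L)}\<rparr>)"
| client_data_done:
  "cl s c = (m, RGetData R) \<Longrightarrow> card (dom R) \<ge> quorum_size (card C) k \<Longrightarrow>
   T = {t. card {j \<in> dom R. \<exists>x \<in> the (R j). x \<in> sigs s \<and> tag_of x = t} \<ge> k} \<Longrightarrow>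
   t \<in> T \<Longrightarrow> (\<forall>t'\<in>T. t' \<le> t) \<Longrightarrow>
   v = dec {e. \<exists>j \<in> dom R. \<exists>\<sigma>. ((t, e), \<sigma>) \<in> the (R j) \<and> ((t, e), \<sigma>) \<in> sigs s} \<Longrightarrow>
   step C B k \<delta> enc dec s (PutData c m t v)
     (s\<lparr>cl := (cl s)(c := (m, RPut t v {})),
        net := net s \<union> put_msgs C enc c m t v,
        sigs := sigs s \<union> put_sigs C enc c t v\<rparr>)"
| client_ack_r:
  "(Node j, Client c, Ack m) \<in> net s \<Longrightarrow> cl s c = (m, RPut t v A) \<Longrightarrow> j \<in> C \<Longrightarrow>
   step C B k \<delta> enc dec s Tau
     (s\<lparr>cl := (cl s)(c := (m, RPut t v (insert j A))),
        net := net s - {(Node j, Client c, Ack m)}\<rparr>)"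
| client_read_done:
  "cl s c = (m, RPut t v A) \<Longrightarrow> card A \<ge> quorum_size (card C) k \<Longrightarrow>
   step C B k \<delta> enc dec s (Respond c m) (s\<lparr>cl := (cl s)(c := (m, Idle))\<rparr>)"

definition init_state :: "'n set \<Rightarrow> ('v \<Rightarrow> 'n \<Rightarrow> 'e) \<Rightarrow> 'c tag \<Rightarrow> 'v \<Rightarrow> ('n,'c,'v,'e) gstate" where
  "init_state C enc t0 v0 =
     \<lparr>nodeList = (\<lambda>j. {((t0, enc v0 j), SigInit)}),
      cl = (\<lambda>c. (0, Idle)),
      net = {},
      sigs = {((t0, enc v0 j), SigInit) | j. j \<in> C}\<rparr>"

definition execution :: "'n set \<Rightarrow> 'n set \<Rightarrow> nat \<Rightarrow> nat \<Rightarrow> ('v \<Rightarrow> 'n \<Rightarrow> 'e)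
    \<Rightarrow> ('e set \<Rightarrow> 'v) \<Rightarrow> 'c::linorder tag \<Rightarrow> 'v
    \<Rightarrow> ('n,'c,'v,'e) gstate list \<Rightarrow> ('c,'v) label list \<Rightarrow> bool" where
  "execution C B k \<delta> enc dec t0 v0 ss ls \<longleftrightarrow>
     length ss = Suc (length ls) \<and> ss ! 0 = init_state C enc t0 v0 \<and>
     (\<forall>i < length ls. step C B k \<delta> enc dec (ss ! i) (ls ! i) (ss ! Suc i))"

definition mds_code :: "'n set \<Rightarrow> nat \<Rightarrow> ('v \<Rightarrow> 'n \<Rightarrow> 'e) \<Rightarrow> ('e set \<Rightarrow> 'v) \<Rightarrow> bool" where
  "mds_code C k enc dec \<longleftrightarrow> 1 \<le> k \<and> k \<le> card C \<and>
     (\<forall>v S. S \<subseteq> C \<longrightarrow> card S \<ge> k \<longrightarrow> dec (enc v ` S) = v)"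

end

theory Submission imports Defs begin

declare split_paired_All[simp del] split_paired_Ex[simp del]

definition hastag :: "('n,'c::linorder,'v,'e) gstate \<Rightarrow> 'n \<Rightarrow> 'c tag \<Rightarrow> bool" where
  "hastag s j t \<longleftrightarrow> (\<exists>x\<in>nodeList s j. t \<le> tag_of x)"

lemma prune_sub: "prune \<delta> L \<subseteq> L"
  by (auto simp: prune_def)

lemma prune_keep:
  fixes L :: "('c::linorder,'e) entry set"
  assumes inj: "inj_on tag_of L" and y: "y \<in> L" and t: "t \<le> tag_of y"
  shows "\<exists>z\<in>prune \<delta> L. t \<le> tag_of z"
proof (cases "card L > \<delta> + 1")
  case False then show ?thesis using y t by (auto simp: prune_def)
next
  case True
  then have fin: "finite L" using card.infinite by fastforce
  have c: "card (tag_of ` L) \<ge> 2" using True card_image[OF inj] by simp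
  have "\<exists>z\<in>L. tag_of z \<noteq> Min (tag_of ` L)"
  proof (rule ccontr)
    assume "\<not> ?thesis"
    then have "tag_of ` L \<subseteq> {Min (tag_of ` L)}" by auto
    then have "card (tag_of ` L) \<le> 1"
      by (metis card_mono finite.emptyI finite.insertI is_singletonI is_singleton_altdef)
    then show False using c by simp
  qed
  then obtain z where z: "z \<in> L" "tag_of z \<noteq> Min (tag_of ` L)" by blast
  show ?thesis
  proof (cases "tag_of y = Min (tag_of ` L)")
    case True
    have "Min (tag_of ` L) \<le> tag_of z" using z fin by simp
    then have "t \<le> tag_of z" using True t by simp
    moreover have "z \<in> prune \<delta> L" using z \<open>card L > \<delta> + 1\<close> by (simp add: prune_def)
    ultimately show ?thesis by blast
  next
    case False
    then have "y \<in> prune \<delta> L" using y \<open>card L > \<delta> + 1\<close> by (simp add: prune_def)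
    then show ?thesis using t by blast
  qed
qed

lemma prune_inj: "inj_on tag_of L \<Longrightarrow> inj_on tag_of (prune \<delta> L)"
  using inj_on_subset prune_sub by blast

lemma node_put_sub: "node_put \<delta> S x L \<subseteq> L \<union> ({x} \<inter> S)"
  unfolding node_put_def using prune_sub[of \<delta> "insert x L"] prune_sub[of \<delta> L] by (auto split: if_splits)

lemma node_put_inj: "inj_on tag_of L \<Longrightarrow> inj_on tag_of (node_put \<delta> S x L)"
  unfolding node_put_def
  by (rule prune_inj) (auto simp: inj_on_def)

lemma node_put_keep:
  "inj_on tag_of L \<Longrightarrow> y \<in> L \<Longrightarrow> t \<le> tag_of y \<Longrightarrow> \<exists>z\<in>node_put \<delta> S x L. t \<le> tag_of z"
  unfolding node_put_def
  by (rule prune_keep) (auto simp: inj_on_def)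

lemma node_put_new:
  "inj_on tag_of L \<Longrightarrow> x \<in> S \<Longrightarrow> t \<le> tag_of x \<Longrightarrow> \<exists>z\<in>node_put \<delta> S x L. t \<le> tag_of z"
proof (cases "\<forall>y\<in>L. tag_of y \<noteq> tag_of x")
  case True
  assume "inj_on tag_of L" "x \<in> S" "t \<le> tag_of x"
  then show ?thesis using True unfolding node_put_def
    by (intro prune_keep[of _ x]) (auto simp: inj_on_def)
next
  case False
  assume a: "inj_on tag_of L" "x \<in> S" "t \<le> tag_of x"
  then obtain y where "y \<in> L" "tag_of y = tag_of x" using False by auto
  then show ?thesis using node_put_keep[OF a(1)] a by metis
qed



definition prephase :: "('n,'c,'v,'e) phase \<Rightarrow> bool" where
  "prephase ph = (case ph of WGetTag _ _ \<Rightarrow> True | RGetData _ \<Rightarrow> True | _ \<Rightarrow> False)"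

definition ok_msg :: "'n set \<Rightarrow> ('c \<Rightarrow> nat \<times> ('n,'c,'v,'e) phase) \<Rightarrow> ('n,'c,'e) msg \<Rightarrow> bool" where
"ok_msg B f msg = (case msg of
   (Client c, _, QTag m) \<Rightarrow> m \<le> fst (f c)
 | (Client c, _, PutReq m _) \<Rightarrow> m < fst (f c) \<or> (m = fst (f c) \<and> \<not> prephase (snd (f c)))
 | (Node j, Client c, RTag m _) \<Rightarrow> j \<notin> B \<longrightarrow> m \<le> fst (f c)
 | (Node j, Client c, Ack m) \<Rightarrow> j \<notin> B \<longrightarrow> (m < fst (f c) \<or> (m = fst (f c) \<and> \<not> prephase (snd (f c))))
 | _ \<Rightarrow> True)"

definition clmono :: "('c \<Rightarrow> nat \<times> ('n,'c,'v,'e) phase) \<Rightarrow> ('c \<Rightarrow> nat \<times> ('n,'c,'v,'e) phase) \<Rightarrow> bool" where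
"clmono f g \<longleftrightarrow> (\<forall>c. fst (f c) < fst (g c) \<or> (fst (f c) = fst (g c) \<and> (prephase (snd (g c)) \<longrightarrow> prephase (snd (f c)))))"

lemma ok_msg_mono: "clmono f g \<Longrightarrow> ok_msg B f msg \<Longrightarrow> ok_msg B g msg"
  unfolding clmono_def ok_msg_def
  apply (cases msg)
  subgoal for src dst p
    apply (cases src; cases dst; cases p)
    apply (auto simp: )
    apply (metis less_or_eq_imp_le order.strict_trans1)+
    done
  done

lemma ok_msg_simps:
  "ok_msg B f (Client c, d, QTag m) = (m \<le> fst (f c))"
  "ok_msg B f (Client c, d, PutReq m x) = (m < fst (f c) \<or> (m = fst (f c) \<and> \<not> prephase (snd (f c))))"
  "ok_msg B f (Node j, Client c, RTag m x) = (j \<notin> B \<longrightarrow> m \<le> fst (f c))"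
  "ok_msg B f (Node j, Client c, Ack m) = (j \<notin> B \<longrightarrow> (m < fst (f c) \<or> (m = fst (f c) \<and> \<not> prephase (snd (f c)))))"
  "ok_msg B f (Node j, Client c, QData m) = True"
  "ok_msg B f (Node j, Client c, RData m L) = True"
  "ok_msg B f (Node j, Client c, QTag m) = True"
  "ok_msg B f (Node j, Client c, PutReq m x) = True"
  "ok_msg B f (Node j, Node j', p) = True"
  "ok_msg B f (Client c, d, Ack m) = True"
  "ok_msg B f (Client c, d, RTag m x) = True"
  "ok_msg B f (Client c, d, QData m) = True"
  "ok_msg B f (Client c, d, RData m L) = True"
  by (auto simp: ok_msg_def split: payload.splits)

lemma ok_msg_byz: "j \<in> B \<Longrightarrow> ok_msg B f (Node j, d, p)"
  by (cases d; cases p) (auto simp: ok_msg_simps)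

lemma step_clmono:
  assumes "step C B k \<delta> enc dec s l s'"
  shows "clmono (cl s) (cl s')"
  using assms
  by (cases rule: step.cases) (auto simp: clmono_def prephase_def)


lemma net_step:
  assumes st: "step C B k \<delta> enc dec s l s'" and ok: "\<forall>msg\<in>net s. ok_msg B (cl s) msg"
  shows "\<forall>msg\<in>net s'. ok_msg B (cl s') msg"
proof -
  have old: "\<forall>msg\<in>net s. ok_msg B (cl s') msg"
    using ok ok_msg_mono[OF step_clmono[OF st]] by blast
  from st show ?thesis
  proof (cases rule: step.cases)
    case (node_qtag c j m x)
    have "ok_msg B (cl s) (Client c, Node j, QTag m)" using ok node_qtag by blast
    then show ?thesis using old node_qtag by (auto simp: ok_msg_simps)
  next
    case (node_put c j m x)
    have "ok_msg B (cl s) (Client c, Node j, PutReq m x)" using ok node_put by blast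
    then show ?thesis using old node_put by (auto simp: ok_msg_simps)
  next
    case (byz_send j p dst)
    then show ?thesis using old by (auto simp: ok_msg_byz)
  qed (use old in \<open>auto simp: ok_msg_simps put_msgs_def prephase_def\<close>)
qed


definition ok_cl :: "'n set \<Rightarrow> ('c \<Rightarrow> nat \<times> ('n,'c,'v,'e) phase) \<Rightarrow> bool" where
"ok_cl C f \<longleftrightarrow> (\<forall>c m t A. f c = (m, WPut t A) \<longrightarrow> A \<subseteq> C) \<and>
 (\<forall>c m t v A. f c = (m, RPut t v A) \<longrightarrow> A \<subseteq> C) \<and>
 (\<forall>c m v R. f c = (m, WGetTag v R) \<longrightarrow> dom R \<subseteq> C)"

definition Inv :: "'n set \<Rightarrow> 'n set \<Rightarrow> ('n,'c::linorder,'v,'e) gstate \<Rightarrow> bool" where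
"Inv C B s \<longleftrightarrow> (\<forall>j\<in>C. nodeList s j \<subseteq> sigs s) \<and> (\<forall>j. inj_on tag_of (nodeList s j)) \<and>
   (\<forall>msg\<in>net s. ok_msg B (cl s) msg) \<and> ok_cl C (cl s)"

lemma sigs_mono: "step C B k \<delta> enc dec s l s' \<Longrightarrow> sigs s \<subseteq> sigs s'"
  by (cases rule: step.cases) auto

lemma nodeList_step:
  assumes "step C B k \<delta> enc dec s l s'"
  shows "nodeList s' = nodeList s \<or>
    (\<exists>c j m x. (Client c, Node j, PutReq m x) \<in> net s \<and> j \<in> C - B \<and>
       nodeList s' = (nodeList s)(j := node_put \<delta> (sigs s) x (nodeList s j)))"
  using assms
proof (cases rule: step.cases)
  case node_put
  then show ?thesis by (simp del: split_paired_Ex split_paired_All) blast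
qed simp_all

lemma okcl_step:
  assumes "step C B k \<delta> enc dec s l s'" "ok_cl C (cl s)"
  shows "ok_cl C (cl s')"
  using assms(1)
  by (cases rule: step.cases) (use assms(2) in \<open>auto simp: ok_cl_def simp del: split_paired_All split_paired_Ex\<close>)

lemma Inv_init: "Inv C B (init_state C enc t0 v0)"
  by (auto simp: Inv_def init_state_def ok_cl_def)

lemma Inv_step:
  assumes st: "step C B k \<delta> enc dec s l s'" and I: "Inv C B s"
  shows "Inv C B s'"
proof -
  have n: "\<forall>msg\<in>net s'. ok_msg B (cl s') msg" using net_step[OF st] I by (simp add: Inv_def)
  have o: "ok_cl C (cl s')" using okcl_step[OF st] I by (simp add: Inv_def)
  have sg: "sigs s \<subseteq> sigs s'" by (rule sigs_mono[OF st])
  have nl: "(\<forall>j\<in>C. nodeList s' j \<subseteq> sigs s') \<and> (\<forall>j. inj_on tag_of (nodeList s' j))"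
    using nodeList_step[OF st]
  proof
    assume "nodeList s' = nodeList s" then show ?thesis using I sg by (auto simp: Inv_def)
  next
    assume "\<exists>c j m x. (Client c, Node j, PutReq m x) \<in> net s \<and> j \<in> C - B \<and>
       nodeList s' = (nodeList s)(j := node_put \<delta> (sigs s) x (nodeList s j))"
    then obtain j x where e: "nodeList s' = (nodeList s)(j := node_put \<delta> (sigs s) x (nodeList s j))" by blast
    have "node_put \<delta> (sigs s) x (nodeList s j) \<subseteq> nodeList s j \<union> ({x} \<inter> sigs s)" by (rule node_put_sub)
    moreover have "inj_on tag_of (node_put \<delta> (sigs s) x (nodeList s j))"
      using I node_put_inj unfolding Inv_def by blast
    ultimately show ?thesis using I sg e by (auto simp: Inv_def)
  qed
  show ?thesis using n o nl by (simp add: Inv_def)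
qed

lemma hastag_step:
  assumes st: "step C B k \<delta> enc dec s l s'" and I: "Inv C B s" and h: "hastag s j t"
  shows "hastag s' j t"
  using nodeList_step[OF st]
proof
  assume "nodeList s' = nodeList s" then show ?thesis using h by (simp add: hastag_def)
next
  assume "\<exists>c j m x. (Client c, Node j, PutReq m x) \<in> net s \<and> j \<in> C - B \<and>
     nodeList s' = (nodeList s)(j := node_put \<delta> (sigs s) x (nodeList s j))"
  then obtain j' x where e: "nodeList s' = (nodeList s)(j' := node_put \<delta> (sigs s) x (nodeList s j'))" by blast
  show ?thesis
  proof (cases "j = j'")
    case True
    obtain y where "y \<in> nodeList s j" "t \<le> tag_of y" using h by (auto simp: hastag_def)
    then show ?thesis using node_put_keep[of "nodeList s j" y t \<delta> "sigs s" x] I e True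
      by (auto simp: hastag_def Inv_def)
  next
    case False then show ?thesis using h e by (simp add: hastag_def)
  qed
qed


definition okQ :: "'n set \<Rightarrow> 'c tag \<Rightarrow> ('n,'c::linorder,'v,'e) gstate \<Rightarrow> ('n,'c,'v,'e) phase \<Rightarrow> bool" where
"okQ B t s ph = (case ph of WPut t' A \<Rightarrow> t' = t \<and> (\<forall>j\<in>A-B. hastag s j t)
   | RPut t' v A \<Rightarrow> t' = t \<and> (\<forall>j\<in>A-B. hastag s j t) | Idle \<Rightarrow> True | Crashed \<Rightarrow> True | _ \<Rightarrow> False)"

definition Qp :: "'c \<Rightarrow> nat \<Rightarrow> 'c tag \<Rightarrow> 'n set \<Rightarrow> ('n,'c::linorder,'v,'e) gstate \<Rightarrow> bool" where
"Qp c n t B s \<longleftrightarrow> n \<le> fst (cl s c) \<and> (fst (cl s c) = n \<longrightarrow> okQ B t s (snd (cl s c))) \<and>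
  (\<forall>x dst. (Client c, dst, PutReq n x) \<in> net s \<longrightarrow> x \<in> sigs s \<and> tag_of x = t) \<and>
  (\<forall>j. j \<notin> B \<longrightarrow> (Node j, Client c, Ack n) \<in> net s \<longrightarrow> hastag s j t)"

lemma Qp_step:
  assumes st: "step C B k \<delta> enc dec s l s'" and I: "Inv C B s" and Q: "Qp c n t B s"
  shows "Qp c n t B s'"
  using st
proof (cases rule: step.cases)
  case (node_put c0 j m x)
  have H: "\<And>j. hastag s j t \<Longrightarrow> hastag s' j t" using hastag_step[OF st I] by blast
  have e: "cl s' = cl s" "sigs s' = sigs s"
     "net s' = insert (Node j, Client c0, Ack m) (net s - {(Client c0, Node j, PutReq m x)})"
    using node_put by simp_all
  have new: "hastag s' j t" if "c0 = c" "m = n"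
  proof -
    have "x \<in> sigs s" "tag_of x = t" using Q node_put that unfolding Qp_def by blast+
    moreover have "inj_on tag_of (nodeList s j)" using I by (simp add: Inv_def)
    ultimately obtain z where "z \<in> node_put \<delta> (sigs s) x (nodeList s j)" "t \<le> tag_of z"
      using node_put_new[of "nodeList s j" x "sigs s" t \<delta>] by auto
    then show ?thesis using node_put by (auto simp: hastag_def)
  qed
  have okq: "okQ B t s' ph" if "okQ B t s ph" for ph
    using that H by (auto simp: okQ_def split: phase.splits)
  show ?thesis using Q new okq H unfolding Qp_def e by auto
qed (use Q I in \<open>auto simp: Qp_def okQ_def hastag_def put_msgs_def put_sigs_def ok_msg_simps split: phase.splits\<close>)


definition okW :: "'n set \<Rightarrow> 'c tag \<Rightarrow> ('n,'c::linorder,'v,'e) gstate \<Rightarrow> ('n,'c,'v,'e) phase \<Rightarrow> bool" where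
"okW G t s ph = (case ph of WGetTag v R \<Rightarrow> (\<forall>j\<in>G. \<forall>x. R j = Some x \<longrightarrow> x \<in> sigs s \<and> t \<le> tag_of x)
   | RGetData _ \<Rightarrow> False | RPut _ _ _ \<Rightarrow> False | _ \<Rightarrow> True)"

definition Pw :: "'c \<Rightarrow> nat \<Rightarrow> 'n set \<Rightarrow> 'c tag \<Rightarrow> ('n,'c::linorder,'v,'e) gstate \<Rightarrow> bool" where
"Pw c n G t s \<longleftrightarrow> n \<le> fst (cl s c) \<and> (\<forall>j\<in>G. hastag s j t) \<and>
  (\<forall>j\<in>G. \<forall>x. (Node j, Client c, RTag n x) \<in> net s \<longrightarrow> x \<in> sigs s \<and> t \<le> tag_of x) \<and>
  (fst (cl s c) = n \<longrightarrow> okW G t s (snd (cl s c)))"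

lemma Pw_step:
  assumes st: "step C B k \<delta> enc dec s l s'" and I: "Inv C B s" and P: "Pw c n G t s"
    and G: "G \<inter> B = {}"
  shows "Pw c n G t s'"
  using st
proof (cases rule: step.cases)
  case (node_put c0 j m x)
  have H: "\<And>j. hastag s j t \<Longrightarrow> hastag s' j t" using hastag_step[OF st I] by blast
  have e: "cl s' = cl s" "sigs s' = sigs s"
     "net s' = insert (Node j, Client c0, Ack m) (net s - {(Client c0, Node j, PutReq m x)})"
    using node_put by simp_all
  have okw: "okW G t s' ph" if "okW G t s ph" for ph
    using that by (auto simp: okW_def e split: phase.splits)
  show ?thesis using P okw H unfolding Pw_def e by auto
next
  case (node_qtag c0 j m x)
  have e: "cl s' = cl s" "sigs s' = sigs s" "nodeList s' = nodeList s"
     "net s' = insert (Node j, Client c0, RTag m x) (net s - {(Client c0, Node j, QTag m)})"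
    using node_qtag by simp_all
  have new: "x \<in> sigs s \<and> t \<le> tag_of x" if jG: "j \<in> G"
  proof -
    have "x \<in> sigs s" using I node_qtag by (auto simp: Inv_def)
    moreover obtain y where "y \<in> nodeList s j" "t \<le> tag_of y" using P jG unfolding Pw_def hastag_def by blast
    then have "t \<le> tag_of x" using node_qtag order_trans by blast
    ultimately show ?thesis by blast
  qed
  have okw: "okW G t s' ph" if "okW G t s ph" for ph
    using that by (auto simp: okW_def e split: phase.splits)
  show ?thesis using P okw new unfolding Pw_def e hastag_def by auto
qed (use P G in \<open>auto simp: Pw_def okW_def hastag_def put_msgs_def put_sigs_def split: phase.splits\<close>)


lemma exec_Inv:
  assumes ex: "execution C B k \<delta> enc dec t0 v0 ss ls" and i: "i \<le> length ls"
  shows "Inv C B (ss!i)"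
  using i
proof (induction i)
  case 0 then show ?case using ex Inv_init by (simp add: execution_def)
next
  case (Suc i)
  then have "step C B k \<delta> enc dec (ss!i) (ls!i) (ss!Suc i)" using ex by (simp add: execution_def)
  then show ?case using Suc Inv_step by simp
qed

lemma exec_from:
  assumes ex: "execution C B k \<delta> enc dec t0 v0 ss ls"
    and base: "P (ss!a)" and ab: "a \<le> b" "b \<le> length ls"
    and stp: "\<And>i. a \<le> i \<Longrightarrow> i < length ls \<Longrightarrow> Inv C B (ss!i) \<Longrightarrow>
       step C B k \<delta> enc dec (ss!i) (ls!i) (ss!Suc i) \<Longrightarrow> P (ss!i) \<Longrightarrow> P (ss!Suc i)"
  shows "P (ss!b)"
  using ab
proof (induction b)
  case 0 then show ?case using base by simp
next
  case (Suc b)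
  show ?case
  proof (cases "a = Suc b")
    case True then show ?thesis using base by simp
  next
    case False
    then have ab': "a \<le> b" "b < length ls" using Suc.prems by auto
    then have "P (ss!b)" using Suc.IH by simp
    moreover have "step C B k \<delta> enc dec (ss!b) (ls!b) (ss!Suc b)" using ex ab' by (simp add: execution_def)
    moreover have "Inv C B (ss!b)" using exec_Inv[OF ex] ab' by simp
    ultimately show ?thesis using stp ab' by blast
  qed
qed

lemma resp_step:
  assumes "step C B k \<delta> enc dec s (Respond c m) s'"
  shows "cl s' c = (m, Idle) \<and> ((\<exists>t A. cl s c = (m, WPut t A) \<and> quorum_size (card C) k \<le> card A) \<or>
     (\<exists>t v A. cl s c = (m, RPut t v A) \<and> quorum_size (card C) k \<le> card A))"
  using assms by (cases rule: step.cases) auto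

lemma invw_step:
  assumes "step C B k \<delta> enc dec s (InvokeW c m v) s'"
  shows "\<exists>m0. m = Suc m0 \<and> cl s c = (m0, Idle) \<and> cl s' c = (m, WGetTag v Map.empty) \<and>
     net s' = net s \<union> {(Client c, Node j, QTag m) | j. j \<in> C}"
  using assms by (cases rule: step.cases) auto

lemma put_step:
  assumes "step C B k \<delta> enc dec s (PutData c m t v) s'"
  shows "net s' = net s \<union> put_msgs C enc c m t v \<and> sigs s' = sigs s \<union> put_sigs C enc c t v \<and>
    ((\<exists>R t'. cl s c = (m, WGetTag v R) \<and> quorum_size (card C) k \<le> card (dom R) \<and>
        (\<forall>x\<in>ran R. x \<in> sigs s \<longrightarrow> tag_of x \<le> t') \<and> t = (Suc (fst t'), c) \<and> cl s' c = (m, WPut t {})) \<or>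
     (\<exists>R. cl s c = (m, RGetData R) \<and> cl s' c = (m, RPut t v {})))"
  using assms
proof (cases rule: step.cases)
  case (client_tag_done R t')
  then have "cl s' c = (m, WPut t {})" "net s' = net s \<union> put_msgs C enc c m t v"
    "sigs s' = sigs s \<union> put_sigs C enc c t v" by simp_all
  then show ?thesis using client_tag_done by blast
qed auto

lemma quorum_count:
  fixes C A D B :: "'n set"
  assumes fin: "finite C" and AC: "A \<subseteq> C" and DC: "D \<subseteq> C"
    and qA: "quorum_size (card C) k \<le> card A" and qD: "quorum_size (card C) k \<le> card D"
    and BC: "B \<subseteq> C" and Bb: "card B \<le> b" and bb: "real b < (real (card C) - real k) / 3" and k: "1 \<le> k"
  shows "\<exists>j\<in>A \<inter> D. j \<notin> B"
proof (rule ccontr)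
  assume "\<not> ?thesis"
  then have sub: "A \<inter> D \<subseteq> B" by auto
  have fB: "finite B" using fin BC finite_subset by auto
  have fA: "finite A" "finite D" using fin AC DC finite_subset by auto
  have "card (A \<inter> D) \<le> card B" using sub fB by (simp add: card_mono)
  then have c1: "card (A \<inter> D) \<le> b" using Bb by simp
  have "card A + card D = card (A \<union> D) + card (A \<inter> D)" using card_Un_Int fA by blast
  moreover have "card (A \<union> D) \<le> card C" using AC DC fin by (simp add: card_mono)
  ultimately have c2: "card A + card D \<le> card C + b" using c1 by linarith
  have "real (quorum_size (card C) k) \<ge> (2 * real (card C) + real k) / 3"
    unfolding quorum_size_def by linarith
  then have "2 * ((2 * real (card C) + real k) / 3) \<le> real (card C) + real b"
    using c2 qA qD by linarith
  then show False using bb k by (simp add: field_simps)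
qed

lemma tag_lt: "(t1::'c::linorder tag) \<le> t2 \<Longrightarrow> t1 < (Suc (fst t2), c)"
  by (cases t1; cases t2) (auto simp: less_eq_prod_def less_prod_def)


theorem mainTheorem6:
  fixes C B :: "'n set" and b k \<delta> :: nat
    and enc :: "'v \<Rightarrow> 'n \<Rightarrow> 'e" and dec :: "'e set \<Rightarrow> 'v"
    and t0 :: "'c::linorder tag" and v0 :: 'v
    and ss :: "('n,'c,'v,'e) gstate list" and ls :: "('c,'v) label list"
  assumes "finite C"
    and "mds_code C k enc dec"
    and "\<delta> \<ge> 1"
    and "B \<subseteq> C" and "card B \<le> b"
    and "real b < (real (card C) - real k) / 3"
    and "execution C B k \<delta> enc dec t0 v0 ss ls"
    \<comment> \<open>pi = operation number n_pi of client c_pi; omega = write number n_om of c_om\<close>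
    and "i < j" and "j < length ls"
    and "ls ! i = Respond c\<^sub>\<pi> n\<^sub>\<pi>"
    and "ls ! j = InvokeW c\<^sub>\<omega> n\<^sub>\<omega> v"
    and "p < length ls" and "ls ! p = PutData c\<^sub>\<pi> n\<^sub>\<pi> t\<^sub>\<pi> v\<^sub>\<pi>"
    and "q < length ls" and "ls ! q = PutData c\<^sub>\<omega> n\<^sub>\<omega> t\<^sub>\<omega> v\<^sub>\<omega>"
  shows "t\<^sub>\<omega> > t\<^sub>\<pi>"
proof -
  note fin = assms(1) and BC = assms(4) and Bb = assms(5) and bb = assms(6) and ex = assms(7)
  have k1: "1 \<le> k" using assms(2) by (simp add: mds_code_def)
  have STP: "\<And>x. x < length ls \<Longrightarrow> step C B k \<delta> enc dec (ss!x) (ls!x) (ss!Suc x)"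
    using ex by (simp add: execution_def)
  have INV: "\<And>x. x \<le> length ls \<Longrightarrow> Inv C B (ss!x)" using exec_Inv[OF ex] by blast
  have il: "i < length ls" using assms(8,9) by simp
  have R: "cl (ss!Suc i) c\<^sub>\<pi> = (n\<^sub>\<pi>, Idle) \<and>
     ((\<exists>t A. cl (ss!i) c\<^sub>\<pi> = (n\<^sub>\<pi>, WPut t A) \<and> quorum_size (card C) k \<le> card A) \<or>
     (\<exists>t v A. cl (ss!i) c\<^sub>\<pi> = (n\<^sub>\<pi>, RPut t v A) \<and> quorum_size (card C) k \<le> card A))"
    using resp_step[OF STP[OF il, unfolded assms(10)]] by simp
  have Pp: "net (ss!Suc p) = net (ss!p) \<union> put_msgs C enc c\<^sub>\<pi> n\<^sub>\<pi> t\<^sub>\<pi> v\<^sub>\<pi> \<and>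
    sigs (ss!Suc p) = sigs (ss!p) \<union> put_sigs C enc c\<^sub>\<pi> t\<^sub>\<pi> v\<^sub>\<pi> \<and>
    ((\<exists>R t'. cl (ss!p) c\<^sub>\<pi> = (n\<^sub>\<pi>, WGetTag v\<^sub>\<pi> R) \<and> quorum_size (card C) k \<le> card (dom R) \<and>
        (\<forall>x\<in>ran R. x \<in> sigs (ss!p) \<longrightarrow> tag_of x \<le> t') \<and> t\<^sub>\<pi> = (Suc (fst t'), c\<^sub>\<pi>) \<and>
        cl (ss!Suc p) c\<^sub>\<pi> = (n\<^sub>\<pi>, WPut t\<^sub>\<pi> {})) \<or>
     (\<exists>R. cl (ss!p) c\<^sub>\<pi> = (n\<^sub>\<pi>, RGetData R) \<and> cl (ss!Suc p) c\<^sub>\<pi> = (n\<^sub>\<pi>, RPut t\<^sub>\<pi> v\<^sub>\<pi> {})))"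
    using put_step[OF STP[OF assms(12), unfolded assms(13)]] by simp
  have pre_p: "fst (cl (ss!p) c\<^sub>\<pi>) = n\<^sub>\<pi> \<and> prephase (snd (cl (ss!p) c\<^sub>\<pi>))"
    using Pp by (auto simp: prephase_def)
  have pi: "p < i"
  proof (rule ccontr)
    assume "\<not> p < i"
    moreover have "p \<noteq> i" using assms(10,13) by auto
    ultimately have ip: "Suc i \<le> p" by simp
    let ?N = "\<lambda>s. n\<^sub>\<pi> \<le> fst (cl s c\<^sub>\<pi>) \<and> (fst (cl s c\<^sub>\<pi>) = n\<^sub>\<pi> \<longrightarrow> \<not> prephase (snd (cl s c\<^sub>\<pi>)))"
    have "?N (ss!p)"
    proof (rule exec_from[OF ex, of ?N "Suc i" p])
      show "?N (ss!Suc i)" using R by (simp add: prephase_def)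
      show "Suc i \<le> p" by (rule ip)
      show "p \<le> length ls" using assms(12) by simp
    next
      fix x assume "Suc i \<le> x" "x < length ls" "Inv C B (ss!x)" "step C B k \<delta> enc dec (ss!x) (ls!x) (ss!Suc x)" "?N (ss!x)"
      then have "clmono (cl (ss!x)) (cl (ss!Suc x))" using step_clmono by blast
      then have "fst (cl (ss!x) c\<^sub>\<pi>) < fst (cl (ss!Suc x) c\<^sub>\<pi>) \<or> (fst (cl (ss!x) c\<^sub>\<pi>) = fst (cl (ss!Suc x) c\<^sub>\<pi>) \<and>
         (prephase (snd (cl (ss!Suc x) c\<^sub>\<pi>)) \<longrightarrow> prephase (snd (cl (ss!x) c\<^sub>\<pi>))))"
        unfolding clmono_def by blast
      then show "?N (ss!Suc x)" using \<open>?N (ss!x)\<close> by auto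
    qed
    then show False using pre_p by simp
  qed
  have Q0: "Qp c\<^sub>\<pi> n\<^sub>\<pi> t\<^sub>\<pi> B (ss!Suc p)"
  proof -
    have I: "Inv C B (ss!p)" using INV assms(12) by simp
    have ok: "\<forall>msg\<in>net (ss!p). ok_msg B (cl (ss!p)) msg" using I by (simp add: Inv_def)
    have c1: "n\<^sub>\<pi> \<le> fst (cl (ss!Suc p) c\<^sub>\<pi>)" and c2: "okQ B t\<^sub>\<pi> (ss!Suc p) (snd (cl (ss!Suc p) c\<^sub>\<pi>))"
      using Pp by (auto simp: okQ_def)
    have c3: "\<forall>x dst. (Client c\<^sub>\<pi>, dst, PutReq n\<^sub>\<pi> x) \<in> net (ss!Suc p) \<longrightarrow> x \<in> sigs (ss!Suc p) \<and> tag_of x = t\<^sub>\<pi>"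
    proof (intro allI impI)
      fix x dst assume a: "(Client c\<^sub>\<pi>, dst, PutReq n\<^sub>\<pi> x) \<in> net (ss!Suc p)"
      have "(Client c\<^sub>\<pi>, dst, PutReq n\<^sub>\<pi> x) \<notin> net (ss!p)"
      proof
        assume "(Client c\<^sub>\<pi>, dst, PutReq n\<^sub>\<pi> x) \<in> net (ss!p)"
        then have "ok_msg B (cl (ss!p)) (Client c\<^sub>\<pi>, dst, PutReq n\<^sub>\<pi> x)" using ok by blast
        then show False using pre_p by (simp add: ok_msg_simps)
      qed
      then have "(Client c\<^sub>\<pi>, dst, PutReq n\<^sub>\<pi> x) \<in> put_msgs C enc c\<^sub>\<pi> n\<^sub>\<pi> t\<^sub>\<pi> v\<^sub>\<pi>" using a Pp by blast
      then obtain j' where "j' \<in> C" "x = ((t\<^sub>\<pi>, enc v\<^sub>\<pi> j'), SigBy c\<^sub>\<pi>)" by (auto simp: put_msgs_def)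
      then show "x \<in> sigs (ss!Suc p) \<and> tag_of x = t\<^sub>\<pi>" using Pp by (auto simp: put_sigs_def tag_of_def)
    qed
    have c4: "\<forall>j'. j' \<notin> B \<longrightarrow> (Node j', Client c\<^sub>\<pi>, Ack n\<^sub>\<pi>) \<in> net (ss!Suc p) \<longrightarrow> hastag (ss!Suc p) j' t\<^sub>\<pi>"
    proof (intro allI impI)
      fix j' assume a: "j' \<notin> B" "(Node j', Client c\<^sub>\<pi>, Ack n\<^sub>\<pi>) \<in> net (ss!Suc p)"
      then have "(Node j', Client c\<^sub>\<pi>, Ack n\<^sub>\<pi>) \<in> net (ss!p)" using Pp by (auto simp: put_msgs_def)
      then have "ok_msg B (cl (ss!p)) (Node j', Client c\<^sub>\<pi>, Ack n\<^sub>\<pi>)" using ok by blast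
      then show "hastag (ss!Suc p) j' t\<^sub>\<pi>" using pre_p a by (simp add: ok_msg_simps)
    qed
    show ?thesis unfolding Qp_def using c1 c2 c3 c4 by blast
  qed
  have Qi: "Qp c\<^sub>\<pi> n\<^sub>\<pi> t\<^sub>\<pi> B (ss!i)"
  proof (rule exec_from[OF ex, of _ "Suc p" i])
    show "Qp c\<^sub>\<pi> n\<^sub>\<pi> t\<^sub>\<pi> B (ss!Suc p)" by (rule Q0)
    show "Suc p \<le> i" using pi by simp
    show "i \<le> length ls" using il by simp
  next
    fix x assume "Suc p \<le> x" "x < length ls" "Inv C B (ss!x)" "step C B k \<delta> enc dec (ss!x) (ls!x) (ss!Suc x)" "Qp c\<^sub>\<pi> n\<^sub>\<pi> t\<^sub>\<pi> B (ss!x)"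
    then show "Qp c\<^sub>\<pi> n\<^sub>\<pi> t\<^sub>\<pi> B (ss!Suc x)" using Qp_step by blast
  qed
  obtain A where A: "quorum_size (card C) k \<le> card A" "\<forall>j'\<in>A-B. hastag (ss!i) j' t\<^sub>\<pi>" "A \<subseteq> C"
  proof -
    have I: "Inv C B (ss!i)" using INV il by simp
    from R show ?thesis
    proof (elim conjE disjE exE)
      fix t A assume a: "cl (ss!i) c\<^sub>\<pi> = (n\<^sub>\<pi>, WPut t A)" "quorum_size (card C) k \<le> card A"
      then have "\<forall>j'\<in>A-B. hastag (ss!i) j' t\<^sub>\<pi>" using Qi by (auto simp: Qp_def okQ_def)
      moreover have "A \<subseteq> C" using I a by (auto simp: Inv_def ok_cl_def)
      ultimately show ?thesis using that a by blast
    next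
      fix t v A assume a: "cl (ss!i) c\<^sub>\<pi> = (n\<^sub>\<pi>, RPut t v A)" "quorum_size (card C) k \<le> card A"
      then have "\<forall>j'\<in>A-B. hastag (ss!i) j' t\<^sub>\<pi>" using Qi by (auto simp: Qp_def okQ_def)
      moreover have "A \<subseteq> C" using I a by (auto simp: Inv_def ok_cl_def)
      ultimately show ?thesis using that a by blast
    qed
  qed
  obtain m0 where W: "n\<^sub>\<omega> = Suc m0" "cl (ss!j) c\<^sub>\<omega> = (m0, Idle)"
    "cl (ss!Suc j) c\<^sub>\<omega> = (n\<^sub>\<omega>, WGetTag v Map.empty)"
    "net (ss!Suc j) = net (ss!j) \<union> {(Client c\<^sub>\<omega>, Node j', QTag n\<^sub>\<omega>) | j'. j' \<in> C}"
    using invw_step[OF STP[OF assms(9), unfolded assms(11)]] by auto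
  let ?G = "A - B"
  have HG: "\<forall>j'\<in>?G. hastag (ss!Suc j) j' t\<^sub>\<pi>"
  proof (rule exec_from[OF ex, of _ i "Suc j"])
    show "\<forall>j'\<in>?G. hastag (ss!i) j' t\<^sub>\<pi>" by (rule A(2))
    show "i \<le> Suc j" using assms(8) by simp
    show "Suc j \<le> length ls" using assms(9) by simp
  next
    fix x assume "i \<le> x" "x < length ls" and I: "Inv C B (ss!x)" and st: "step C B k \<delta> enc dec (ss!x) (ls!x) (ss!Suc x)" and H: "\<forall>j'\<in>?G. hastag (ss!x) j' t\<^sub>\<pi>"
    show "\<forall>j'\<in>?G. hastag (ss!Suc x) j' t\<^sub>\<pi>" using hastag_step[OF st I] H by blast
  qed
  have P0: "Pw c\<^sub>\<omega> n\<^sub>\<omega> ?G t\<^sub>\<pi> (ss!Suc j)"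
  proof -
    have I: "Inv C B (ss!j)" using INV assms(9) by simp
    have ok: "\<forall>msg\<in>net (ss!j). ok_msg B (cl (ss!j)) msg" using I by (simp add: Inv_def)
    have "\<forall>j'\<in>?G. \<forall>x. (Node j', Client c\<^sub>\<omega>, RTag n\<^sub>\<omega> x) \<notin> net (ss!Suc j)"
    proof (intro ballI allI notI)
      fix j' x assume "j' \<in> ?G" "(Node j', Client c\<^sub>\<omega>, RTag n\<^sub>\<omega> x) \<in> net (ss!Suc j)"
      moreover then have "(Node j', Client c\<^sub>\<omega>, RTag n\<^sub>\<omega> x) \<in> net (ss!j)" using W by auto
      then have "ok_msg B (cl (ss!j)) (Node j', Client c\<^sub>\<omega>, RTag n\<^sub>\<omega> x)" using ok by blast
      ultimately show False using W by (simp add: ok_msg_simps)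
    qed
    then show ?thesis using HG W by (auto simp: Pw_def okW_def)
  qed
  have qs: "fst (cl (ss!q) c\<^sub>\<omega>) = n\<^sub>\<omega>"
    using put_step[OF STP[OF assms(14), unfolded assms(15)]] by auto
  have jq: "Suc j \<le> q"
  proof (rule ccontr)
    assume "\<not> Suc j \<le> q"
    then have "q \<le> j" by simp
    have "fst (cl (ss!q) c\<^sub>\<omega>) \<le> fst (cl (ss!j) c\<^sub>\<omega>)"
    proof (rule exec_from[OF ex, of "\<lambda>s. fst (cl (ss!q) c\<^sub>\<omega>) \<le> fst (cl s c\<^sub>\<omega>)" q j])
      show "q \<le> j" by fact
      show "j \<le> length ls" using assms(9) by simp
    next
      fix x assume "q \<le> x" "x < length ls" "Inv C B (ss!x)" "step C B k \<delta> enc dec (ss!x) (ls!x) (ss!Suc x)" "fst (cl (ss!q) c\<^sub>\<omega>) \<le> fst (cl (ss!x) c\<^sub>\<omega>)"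
      then have "clmono (cl (ss!x)) (cl (ss!Suc x))" using step_clmono by blast
      then have "fst (cl (ss!x) c\<^sub>\<omega>) \<le> fst (cl (ss!Suc x) c\<^sub>\<omega>)"
        unfolding clmono_def by (metis less_imp_le order_refl)
      then show "fst (cl (ss!q) c\<^sub>\<omega>) \<le> fst (cl (ss!Suc x) c\<^sub>\<omega>)" using \<open>fst (cl (ss!q) c\<^sub>\<omega>) \<le> fst (cl (ss!x) c\<^sub>\<omega>)\<close> by linarith
    qed simp
    then show False using qs W by simp
  qed
  have Pq: "Pw c\<^sub>\<omega> n\<^sub>\<omega> ?G t\<^sub>\<pi> (ss!q)"
  proof (rule exec_from[OF ex, of _ "Suc j" q])
    show "Pw c\<^sub>\<omega> n\<^sub>\<omega> ?G t\<^sub>\<pi> (ss!Suc j)" by (rule P0)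
    show "Suc j \<le> q" by (rule jq)
    show "q \<le> length ls" using assms(14) by simp
  next
    have GB: "?G \<inter> B = {}" by blast
    fix x assume "Suc j \<le> x" "x < length ls" "Inv C B (ss!x)" "step C B k \<delta> enc dec (ss!x) (ls!x) (ss!Suc x)" "Pw c\<^sub>\<omega> n\<^sub>\<omega> ?G t\<^sub>\<pi> (ss!x)"
    then show "Pw c\<^sub>\<omega> n\<^sub>\<omega> ?G t\<^sub>\<pi> (ss!Suc x)" using Pw_step[OF _ _ _ GB] by blast
  qed
  have Iq: "Inv C B (ss!q)" using INV assms(14) by simp
  have PS: "(\<exists>R t'. cl (ss!q) c\<^sub>\<omega> = (n\<^sub>\<omega>, WGetTag v\<^sub>\<omega> R) \<and> quorum_size (card C) k \<le> card (dom R) \<and>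
        (\<forall>x\<in>ran R. x \<in> sigs (ss!q) \<longrightarrow> tag_of x \<le> t') \<and> t\<^sub>\<omega> = (Suc (fst t'), c\<^sub>\<omega>)) \<or>
     (\<exists>R. cl (ss!q) c\<^sub>\<omega> = (n\<^sub>\<omega>, RGetData R))"
    using put_step[OF STP[OF assms(14), unfolded assms(15)]] by auto
  then obtain R t' where RR: "cl (ss!q) c\<^sub>\<omega> = (n\<^sub>\<omega>, WGetTag v\<^sub>\<omega> R)" "quorum_size (card C) k \<le> card (dom R)"
        "\<forall>x\<in>ran R. x \<in> sigs (ss!q) \<longrightarrow> tag_of x \<le> t'" "t\<^sub>\<omega> = (Suc (fst t'), c\<^sub>\<omega>)"
  proof (elim disjE exE conjE)
    fix R assume "cl (ss!q) c\<^sub>\<omega> = (n\<^sub>\<omega>, RGetData R)"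
    then show ?thesis using Pq by (simp add: Pw_def okW_def)
  qed blast
  have DC: "dom R \<subseteq> C" using Iq RR(1) by (auto simp: Inv_def ok_cl_def)
  obtain j' where j': "j' \<in> A" "j' \<in> dom R" "j' \<notin> B"
    using quorum_count[OF fin A(3) DC A(1) RR(2) BC Bb bb k1] by blast
  then obtain x where x: "R j' = Some x" by auto
  have "x \<in> sigs (ss!q) \<and> t\<^sub>\<pi> \<le> tag_of x" using Pq RR(1) j' x by (auto simp: Pw_def okW_def)
  moreover have "x \<in> ran R" using x by (auto simp: ran_def)
  ultimately have "t\<^sub>\<pi> \<le> t'" using RR(3) order_trans by blast
  then show ?thesis using RR(4) tag_lt by metis
qed

end
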